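(* Let $\{\tau_n\}_{n=1}^\infty$ be a sequence of nonnegative real numbers. Suppose that either $\liminf_{n\to\infty}\tau_n>0$, or that both of the following hold: (a) $\liminf_{n\to\infty} n\tau_n>0$, and (b) there is a constant $C\in(0,\infty)$ such that for each integer $n\ge 0$, if $2^{n-1}\le k<2^n$ then $C\tau_{2^{n-1}}\ge \tau_k\ge C^{-1}\tau_{2^n}$. Then $\{\tau_n\}$ satisfies Condition A.
   Context: "Positive" means nonnegative and "increasing"/"decreasing" mean non-decreasing/non-increasing. A nonnegative sequence $\{\tau_n\}_{n\ge1}$ satisfies Condition A if for every nonnegative non-increasing sequence $\{c_n\}_{n\ge1}$ such that $\sum_{n=1}^\infty \tau_n\min(nc_n,1)<\infty$, we also have $\sum_{n=1}^\infty \tau_n n c_n<\infty$. *)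

theory Defs
  imports "HOL-Analysis.Analysis"
begin

text \<open>Sequences are indexed from 1; the value at index 0 is ignored.
  Series over n >= 1 of nonnegative terms converge iff the shifted series is summable.\<close>

definition conditionA :: "(nat \<Rightarrow> real) \<Rightarrow> bool" where
  "conditionA \<tau> \<longleftrightarrow>
     (\<forall>c :: nat \<Rightarrow> real.
        (\<forall>n\<ge>1. 0 \<le> c n) \<longrightarrow>
        (\<forall>m n. 1 \<le> m \<longrightarrow> m \<le> n \<longrightarrow> c n \<le> c m) \<longrightarrow>
        summable (\<lambda>n. \<tau> (n+1) * min (real (n+1) * c (n+1)) 1) \<longrightarrow>
        summable (\<lambda>n. \<tau> (n+1) * (real (n+1) * c (n+1))))"

end

theory Submission
  imports Defs
begin

lemma get_delta:
  fixes X :: "nat \<Rightarrow> real"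
  assumes "liminf (\<lambda>n. ereal (X n)) > 0"
  shows "\<exists>d>0. \<exists>N. \<forall>n\<ge>N. d < X n"
proof -
  obtain z where z: "0 < ereal z" "ereal z < liminf (\<lambda>n. ereal (X n))"
    using ereal_dense2[OF assms] by blast
  have "\<forall>\<^sub>F n in sequentially. ereal z < ereal (X n)"
    using less_LiminfD[OF z(2)] by simp
  then obtain N where "\<forall>n\<ge>N. z < X n" by (auto simp: eventually_sequentially)
  with z(1) show ?thesis by auto
qed

lemma key:
  fixes \<tau> c :: "nat \<Rightarrow> real" and \<delta> :: real
  assumes d: "\<delta> > 0" and N: "\<And>n. n \<ge> N \<Longrightarrow> \<delta> \<le> real n * \<tau> n"
    and nonneg: "\<And>n. n \<ge> 1 \<Longrightarrow> 0 \<le> \<tau> n"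
    and c0: "\<forall>n\<ge>1. 0 \<le> c n"
    and cm: "\<forall>m n. 1 \<le> m \<longrightarrow> m \<le> n \<longrightarrow> c n \<le> c m"
    and s: "summable (\<lambda>n. \<tau> (n+1) * min (real (n+1) * c (n+1)) 1)"
  shows "summable (\<lambda>n. \<tau> (n+1) * (real (n+1) * c (n+1)))"
proof -
  define f where "f = (\<lambda>n. \<tau> (n+1) * min (real (n+1) * c (n+1)) 1)"
  have ev: "\<exists>M0. \<forall>n\<ge>M0. real n * c n < 1"
  proof (rule ccontr)
    assume H: "\<not> ?thesis"
    obtain M where M: "\<forall>m\<ge>M. \<forall>n. norm (sum f {m..<n}) < \<delta>/4"
      using s d unfolding summable_Cauchy f_def[symmetric] by (meson zero_less_divide_iff zero_less_numeral)
    from H obtain n where n: "n \<ge> 2*M + 2*N + 2" "real n * c n \<ge> 1"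
      by (meson not_less)
    have n1: "n \<ge> 1" using n by simp
    have cn: "c n \<ge> 1 / real n" using n n1 by (simp add: field_simps mult.commute)
    have lb: "\<delta> / real n * (1/2) \<le> f i" if i: "i \<in> {n div 2..<n}" for i
    proof -
      define k where "k = i + 1"
      have k: "n div 2 + 1 \<le> k" "k \<le> n" "k \<ge> 1" "k \<ge> N" "2*k \<ge> n" using i n unfolding k_def by auto
      have "c k \<ge> c n" using cm k by auto
      have "real k * c k \<ge> real k * (1 / real n)"
        using cn \<open>c k \<ge> c n\<close> by (intro mult_left_mono) auto
      moreover have "real k * (1 / real n) \<ge> 1/2" using k n1 by (simp add: field_simps)
      ultimately have m: "min (real k * c k) 1 \<ge> 1/2" by linarith
      have "\<tau> k \<ge> \<delta> / real k" using N[OF k(4)] k(3) by (simp add: field_simps mult.commute)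
      moreover have "\<delta> / real k \<ge> \<delta> / real n" using k d by (intro divide_left_mono) auto
      ultimately have t: "\<tau> k \<ge> \<delta> / real n" by simp
      have "\<delta> / real n * (1/2) \<le> \<tau> k * min (real k * c k) 1"
        using t m d n1 nonneg[OF k(3)] by (intro mult_mono) auto
      then show ?thesis unfolding f_def k_def by simp
    qed
    have "real (card {n div 2..<n}) * (\<delta> / real n * (1/2)) \<le> sum f {n div 2..<n}"
      by (rule sum_bounded_below) (use lb in auto)
    moreover have "real (card {n div 2..<n}) \<ge> real n / 2" by simp
    hence "real (card {n div 2..<n}) * (\<delta> / real n * (1/2)) \<ge> real n / 2 * (\<delta> / real n * (1/2))"
      using d by (intro mult_right_mono) auto
    moreover have "real n / 2 * (\<delta> / real n * (1/2)) = \<delta>/4" using n1 by (simp add: field_simps)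
    moreover have "n div 2 \<ge> M" using n by simp
    hence "norm (sum f {n div 2..<n}) < \<delta>/4" using M by blast
    ultimately show False by simp
  qed
  then obtain M0 where M0: "\<forall>n\<ge>M0. real n * c n < 1" by blast
  have "\<forall>\<^sub>F n in sequentially. \<tau> (n+1) * min (real (n+1) * c (n+1)) 1 = \<tau> (n+1) * (real (n+1) * c (n+1))"
    unfolding eventually_sequentially
  proof (intro exI[of _ M0] allI impI)
    fix n assume "M0 \<le> n"
    then have "real (n+1) * c (n+1) < 1" using spec[OF M0, of "n+1"] \<open>M0 \<le> n\<close> by linarith
    then show "\<tau> (n+1) * min (real (n+1) * c (n+1)) 1 = \<tau> (n+1) * (real (n+1) * c (n+1))"
      by (simp add: min_def)
  qed
  from summable_cong[OF this] show ?thesis using s by simp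
qed

theorem proposition1:
  fixes \<tau> :: "nat \<Rightarrow> real"
  assumes nonneg: "\<And>n. n \<ge> 1 \<Longrightarrow> 0 \<le> \<tau> n"
  assumes hyp: "liminf (\<lambda>n. ereal (\<tau> n)) > 0 \<or>
    (liminf (\<lambda>n. ereal (real n * \<tau> n)) > 0 \<and>
     (\<exists>C::real. 0 < C \<and>
        (\<forall>n::nat. \<forall>k::nat. 1 \<le> k \<and> 2 ^ n \<le> 2 * k \<and> k < 2 ^ n \<longrightarrow>
           C * \<tau> (2 ^ (n - 1)) \<ge> \<tau> k \<and> \<tau> k \<ge> \<tau> (2 ^ n) / C)))"
  shows "conditionA \<tau>"
proof -
  have "\<exists>d>0. \<exists>N. \<forall>n\<ge>N. d \<le> real n * \<tau> n"
    using hyp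
  proof
    assume "liminf (\<lambda>n. ereal (\<tau> n)) > 0"
    then obtain d N where d: "d > 0" "\<forall>n\<ge>N. d < \<tau> n" using get_delta by blast
    have "\<forall>n\<ge>N+1. d \<le> real n * \<tau> n"
    proof (intro allI impI)
      fix n assume "n \<ge> N+1"
      then have "d < \<tau> n" "real n \<ge> 1" using d by auto
      then show "d \<le> real n * \<tau> n" using d
        by (metis less_eq_real_def mult_1 mult_right_mono order_trans)
    qed
    with d show ?thesis by blast
  next
    assume "liminf (\<lambda>n. ereal (real n * \<tau> n)) > 0 \<and>
     (\<exists>C::real. 0 < C \<and>
        (\<forall>n::nat. \<forall>k::nat. 1 \<le> k \<and> 2 ^ n \<le> 2 * k \<and> k < 2 ^ n \<longrightarrow>
           C * \<tau> (2 ^ (n - 1)) \<ge> \<tau> k \<and> \<tau> k \<ge> \<tau> (2 ^ n) / C))"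
    then obtain d N where "d > 0" "\<forall>n\<ge>N. d < real n * \<tau> n" using get_delta[of "\<lambda>n. real n * \<tau> n"] by blast
    then show ?thesis by (meson less_eq_real_def)
  qed
  then obtain d N where d: "d > 0" "\<forall>n\<ge>N. d \<le> real n * \<tau> n" by blast
  show ?thesis unfolding conditionA_def
  proof (intro allI impI)
    fix c :: "nat \<Rightarrow> real"
    assume "\<forall>n\<ge>1. 0 \<le> c n" "\<forall>m n. 1 \<le> m \<longrightarrow> m \<le> n \<longrightarrow> c n \<le> c m"
      "summable (\<lambda>n. \<tau> (n+1) * min (real (n+1) * c (n+1)) 1)"
    then show "summable (\<lambda>n. \<tau> (n+1) * (real (n+1) * c (n+1)))"
      using key[of d N \<tau> c] d nonneg by blast
  qed
qed

end
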